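(* Let $N\in\mathbb{N}^*$, $\sigma>0$, and let $W$ be an $N\times N$ random matrix with i.i.d. $\mathcal{N}(0,\sigma^2)$ entries. For $T\in\mathbb{N}^*$ let $B_{T,N}$ be its generalised matrix of moments of order $T$. Then for all $l_1,l_2\in\{0,\ldots,T-1\}$, \[B_{T,N}(l_1,l_2)\le\frac{1}{\sigma^2N}B_{T,N}(l_1+1,l_2+1),\] and for all $l_1,l_2\in\{0,\ldots,T-2\}$, \[B_{T,N}(l_1,l_2)\le\frac{1}{\sigma^4\left(\frac{l_1+l_2}{N^2}+1\right)}B_{T,N}(l_1+2,l_2+2).\]
   Context: Generalised matrix of moments: for $i\in[N]$, $\beta_{i,0}=1$, $\beta_{i,l}=\sum_{i_1,\ldots,i_l=1}^N W_{ii_1}\cdots W_{i_{l-1}i_l}$ for $l\ge1$, and $B_{T,N}(l_1,l_2)=\mathbb{E}\sum_{i=1}^N\beta_{i,l_1}\beta_{i,l_2}$, $0\le l_1,l_2\le T$. *)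

theory Defs
  imports "HOL-Probability.Probability"
begin

definition beta :: "(nat \<Rightarrow> nat \<Rightarrow> real) \<Rightarrow> nat \<Rightarrow> nat \<Rightarrow> nat \<Rightarrow> real" where
  "beta W N i l =
     (\<Sum>p\<in>{p. length p = l \<and> set p \<subseteq> {..<N}}.
        \<Prod>k<l. W ((i # p) ! k) ((i # p) ! (k + 1)))"

text \<open>The order T only restricts the admissible range 0 <= l1,l2 <= T.\<close>
definition BTN :: "'a measure \<Rightarrow> ('a \<Rightarrow> nat \<Rightarrow> nat \<Rightarrow> real) \<Rightarrow> nat \<Rightarrow> nat \<Rightarrow> nat \<Rightarrow> nat \<Rightarrow> real" where
  "BTN M W T N l1 l2 =
     prob_space.expectation M (\<lambda>\<omega>. \<Sum>i<N. beta (W \<omega>) N i l1 * beta (W \<omega>) N i l2)"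

end

theory Submission
  imports Defs
begin

definition mom :: "real \<Rightarrow> nat \<Rightarrow> real" where
  "mom s n = integral\<^sup>L lborel (\<lambda>x. normal_density 0 s x * x ^ n)"

lemma mom_even: "0 < s \<Longrightarrow> mom s (2*k) = fact (2 * k) / ((2 / s\<^sup>2)^k * fact k)"
  using integral_normal_moment_even[where \<sigma>=s and k=k and \<mu>=0] by (simp add: mom_def)

lemma mom_odd: "0 < s \<Longrightarrow> mom s (2*k+1) = 0"
  using integral_normal_moment_odd[where \<sigma>=s and k=k and \<mu>=0] by (simp add: mom_def)

lemma mom_nonneg: assumes "0 < s" shows "0 \<le> mom s n"
proof (cases "even n")
  case True then obtain k where "n = 2*k" by (auto elim: evenE)
  then show ?thesis using assms by (simp add: mom_even)
next
  case False then obtain k where "n = 2*k+1" by (auto elim: oddE)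
  then show ?thesis using mom_odd[OF assms, of k] by simp
qed

lemma mom_rec: assumes "0 < s" shows "mom s (n+2) = (real n + 1) * s\<^sup>2 * mom s n"
proof (cases "even n")
  case True then obtain k where k: "n = 2*k" by (auto elim: evenE)
  have "n + 2 = 2 * Suc k" using k by simp
  then have "mom s (n+2) = fact (2 * Suc k) / ((2 / s\<^sup>2)^Suc k * fact (Suc k))"
    using mom_even[OF assms] by metis
  also have "\<dots> = (real n + 1) * s\<^sup>2 * (fact (2 * k) / ((2 / s\<^sup>2)^k * fact k))"
  proof -
    have f1: "(fact (2 * Suc k)::real) = (2*real k+2)*(2*real k+1)*fact(2*k)"
      by (simp add: algebra_simps)
    have f2: "(2 / s\<^sup>2)^Suc k = (2/s\<^sup>2) * (2 / s\<^sup>2)^k" by simp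
    have f3: "(fact (Suc k)::real) = (real k + 1) * fact k" by (simp add: algebra_simps)
    have g: "\<And>F P G::real. P > 0 \<Longrightarrow> G > 0 \<Longrightarrow>
      (2*real k+2)*(2*real k+1)*F / ((2/s\<^sup>2) * P * ((real k + 1) * G))
       = (2*real k+1) * s\<^sup>2 * (F / (P * G))"
    proof -
      fix F P G :: real assume a: "P > 0" "G > 0"
      have h: "real k + 1 > 0" by simp
      have e: "(2*real k+2) = 2 * (real k + 1)" by simp
      show "?thesis F P G" unfolding e using a h assms by (simp add: divide_simps)
    qed
    show ?thesis unfolding f1 f2 f3 using g[of "(2 / s\<^sup>2)^k" "fact k" "fact (2*k)"] assms k
      by (simp add: mult.assoc)
  qed
  finally show ?thesis using mom_even[OF assms, of k] k by simp
next
  case False then obtain k where k: "n = 2*k+1" by (auto elim: oddE)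
  have "n + 2 = 2 * Suc k + 1" using k by simp
  then show ?thesis using mom_odd[OF assms, of k] mom_odd[OF assms, of "Suc k"] k by simp
qed

lemma moment_dist:
  assumes "0 < s" "distributed M lborel X (\<lambda>x. ennreal (normal_density 0 s x))"
  shows "integrable M (\<lambda>\<omega>. X \<omega> ^ n)" "integral\<^sup>L M (\<lambda>\<omega>. X \<omega> ^ n) = mom s n"
proof -
  have "integrable lborel (\<lambda>x. normal_density 0 s x * x ^ n)"
    using integrable_normal_moment[where \<sigma>=s and \<mu>=0 and k=n] assms(1) by simp
  then show "integrable M (\<lambda>\<omega>. X \<omega> ^ n)"
    using distributed_integrable[OF assms(2), of "\<lambda>x. x ^ n"] by simp
  show "integral\<^sup>L M (\<lambda>\<omega>. X \<omega> ^ n) = mom s n"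
    using distributed_integral[OF assms(2), of "\<lambda>x. x ^ n"] by (simp add: mom_def)
qed

definition mono :: "(nat \<Rightarrow> nat \<Rightarrow> real) \<Rightarrow> (nat \<times> nat) multiset \<Rightarrow> real" where
  "mono w A = prod_mset (image_mset (\<lambda>e. w (fst e) (snd e)) A)"

definition Gm :: "real \<Rightarrow> (nat \<times> nat) multiset \<Rightarrow> real" where
  "Gm s A = (\<Prod>e\<in>set_mset A. mom s (count A e))"

lemma expect_mono:
  assumes P: "prob_space M" and s: "0 < s"
    and ind: "prob_space.indep_vars M (\<lambda>_. borel) (\<lambda>(i, j) \<omega>. W \<omega> i j) ({..<N} \<times> {..<N})"
    and dist: "\<And>i j. i < N \<Longrightarrow> j < N \<Longrightarrow>
           distributed M lborel (\<lambda>\<omega>. W \<omega> i j) (\<lambda>x. ennreal (normal_density 0 s x))"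
    and A: "set_mset A \<subseteq> {..<N} \<times> {..<N}"
  shows "integrable M (\<lambda>\<omega>. mono (W \<omega>) A)" "integral\<^sup>L M (\<lambda>\<omega>. mono (W \<omega>) A) = Gm s A"
proof -
  interpret prob_space M by (rule P)
  define X where "X e \<omega> = (case e of (i,j) \<Rightarrow> W \<omega> i j) ^ count A e" for e \<omega>
  have eq: "(\<lambda>\<omega>. mono (W \<omega>) A) = (\<lambda>\<omega>. \<Prod>e\<in>set_mset A. X e \<omega>)"
    by (auto simp: mono_def image_prod_mset_multiplicity X_def split: prod.splits intro!: ext prod.cong)
  have ind2: "indep_vars (\<lambda>_. borel) X (set_mset A)"
  proof -
    have "indep_vars (\<lambda>_. borel) (\<lambda>(i, j) \<omega>. W \<omega> i j) (set_mset A)"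
      by (rule indep_vars_subset[OF ind A])
    then have "indep_vars (\<lambda>_. borel) (\<lambda>e \<omega>. (\<lambda>x::real. x ^ count A e) ((\<lambda>(i, j) \<omega>. W \<omega> i j) e \<omega>)) (set_mset A)"
      by (rule indep_vars_compose2) auto
    then show ?thesis by (simp add: X_def[abs_def] case_prod_beta)
  qed
  have int: "integrable M (X e) \<and> integral\<^sup>L M (X e) = mom s (count A e)" if "e \<in> set_mset A" for e
  proof -
    obtain i j where e: "e = (i,j)" by force
    with that A have "i < N" "j < N" by auto
    have "X e = (\<lambda>\<omega>. W \<omega> i j ^ count A (i,j))" by (simp add: X_def[abs_def] e)
    with moment_dist[OF s dist[OF \<open>i<N\<close> \<open>j<N\<close>]] show ?thesis by (simp add: e)
  qed
  show "integrable M (\<lambda>\<omega>. mono (W \<omega>) A)" unfolding eq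
    using indep_vars_integrable[OF _ ind2] int by auto
  show "integral\<^sup>L M (\<lambda>\<omega>. mono (W \<omega>) A) = Gm s A" unfolding eq Gm_def
    using indep_vars_lebesgue_integral[OF _ ind2] int by auto
qed


lemma mom0: "0 < s \<Longrightarrow> mom s 0 = 1"
  using mom_even[of s 0] by simp

lemma Gm_nonneg: "0 < s \<Longrightarrow> 0 \<le> Gm s A"
  unfolding Gm_def by (rule prod_nonneg) (simp add: mom_nonneg)

lemma Gm_add2:
  assumes s: "0 < s"
  shows "Gm s (A + {#e,e#}) = (real (count A e) + 1) * s\<^sup>2 * Gm s A"
proof -
  let ?R = "(\<Prod>x\<in>set_mset A - {e}. mom s (count A x))"
  have GA: "Gm s A = mom s (count A e) * ?R"
  proof (cases "e \<in># A")
    case True then show ?thesis unfolding Gm_def by (simp add: prod.remove)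
  next
    case False then show ?thesis unfolding Gm_def by (simp add: mom0[OF s] not_in_iff)
  qed
  have "Gm s (A + {#e,e#}) = mom s (count A e + 2) * (\<Prod>x\<in>set_mset A - {e}. mom s (count (A + {#e,e#}) x))"
    unfolding Gm_def by (simp add: prod.insert_remove)
  also have "(\<Prod>x\<in>set_mset A - {e}. mom s (count (A + {#e,e#}) x)) = ?R"
    by (rule prod.cong) auto
  finally show ?thesis using GA mom_rec[OF s, of "count A e"] by simp
qed

lemma Gm_add2_ge: "0 < s \<Longrightarrow> s\<^sup>2 * Gm s A \<le> Gm s (A + {#e,e#})"
  using Gm_add2[of s A e] Gm_nonneg[of s A]
  by (simp add: mult_right_mono mult_left_mono)

fun edg :: "nat \<Rightarrow> nat list \<Rightarrow> (nat \<times> nat) multiset" where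
  "edg i [] = {#}"
| "edg i (j#p) = add_mset (i,j) (edg j p)"

lemma mono_add: "mono w (add_mset e A) = w (fst e) (snd e) * mono w A"
  by (simp add: mono_def)

lemma mono_plus: "mono w (A + B) = mono w A * mono w B"
  by (simp add: mono_def)

lemma prod_path: "(\<Prod>k<length p. w ((i#p)!k) ((i#p)!(k+1))) = mono w (edg i p)"
proof (induction p arbitrary: i)
  case Nil then show ?case by (simp add: mono_def)
next
  case (Cons j p)
  have "(\<Prod>k<length (j#p). w ((i#j#p)!k) ((i#j#p)!(k+1)))
      = w i j * (\<Prod>k<length p. w ((j#p)!k) ((j#p)!(k+1)))"
    by (simp add: prod.lessThan_Suc_shift del: prod.lessThan_Suc)
  then show ?case using Cons by (simp add: mono_add)
qed

lemma edg_set: "i < N \<Longrightarrow> set p \<subseteq> {..<N} \<Longrightarrow> set_mset (edg i p) \<subseteq> {..<N} \<times> {..<N}"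
  by (induction p arbitrary: i) auto

lemma size_edg: "size (edg i p) = length p"
  by (induction p arbitrary: i) auto

definition Pset :: "nat \<Rightarrow> nat \<Rightarrow> nat list set" where
  "Pset N l = {p. length p = l \<and> set p \<subseteq> {..<N}}"

lemma finite_Pset: "finite (Pset N l)"
  unfolding Pset_def using finite_lists_length_eq[of "{..<N}" l] by (simp add: conj_commute)

lemma beta_eq: "beta w N i l = (\<Sum>p\<in>Pset N l. mono w (edg i p))"
  unfolding beta_def Pset_def
  by (rule sum.cong) (auto simp: prod_path[symmetric])

lemma Pset_Suc: "Pset N (Suc l) = (\<lambda>(j,p). j#p) ` ({..<N} \<times> Pset N l)"
  unfolding Pset_def by (auto simp: length_Suc_conv image_iff)

lemma sum_Pset_Suc: "(\<Sum>p\<in>Pset N (Suc l). f p) = (\<Sum>j<N. \<Sum>p\<in>Pset N l. f (j#p))"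
proof -
  have inj: "inj_on (\<lambda>(j,p). j#p) ({..<N} \<times> Pset N l)"
    by (auto simp: inj_on_def)
  have "(\<Sum>p\<in>Pset N (Suc l). f p) = (\<Sum>x\<in>{..<N} \<times> Pset N l. f (fst x # snd x))"
    unfolding Pset_Suc using sum.reindex[OF inj, of f] by (simp add: case_prod_beta comp_def)
  also have "\<dots> = (\<Sum>j<N. \<Sum>p\<in>Pset N l. f (j#p))"
    by (simp add: sum.cartesian_product case_prod_beta)
  finally show ?thesis .
qed


definition S :: "real \<Rightarrow> nat \<Rightarrow> nat \<Rightarrow> nat \<Rightarrow> real" where
  "S s N l1 l2 = (\<Sum>i<N. \<Sum>p\<in>Pset N l1. \<Sum>q\<in>Pset N l2. Gm s (edg i p + edg i q))"

lemma S_nonneg: "0 < s \<Longrightarrow> 0 \<le> S s N l1 l2"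
  unfolding S_def by (intro sum_nonneg Gm_nonneg)

lemma BTN_eq:
  assumes P: "prob_space M" and s: "0 < s"
    and ind: "prob_space.indep_vars M (\<lambda>_. borel) (\<lambda>(i, j) \<omega>. W \<omega> i j) ({..<N} \<times> {..<N})"
    and dist: "\<And>i j. i < N \<Longrightarrow> j < N \<Longrightarrow>
           distributed M lborel (\<lambda>\<omega>. W \<omega> i j) (\<lambda>x. ennreal (normal_density 0 s x))"
  shows "BTN M W T N l1 l2 = S s N l1 l2"
proof -
  have A: "set_mset (edg i p + edg i q) \<subseteq> {..<N} \<times> {..<N}"
    if "i < N" "p \<in> Pset N l1" "q \<in> Pset N l2" for i p q
    using edg_set[of i N p] edg_set[of i N q] that by (auto simp: Pset_def)
  have I1: "integrable M (\<lambda>\<omega>. mono (W \<omega>) (edg i p + edg i q))"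
    if "i < N" "p \<in> Pset N l1" "q \<in> Pset N l2" for i p q
    using expect_mono(1)[OF P s ind dist A[OF that]] by blast
  have I2: "integral\<^sup>L M (\<lambda>\<omega>. mono (W \<omega>) (edg i p + edg i q)) = Gm s (edg i p + edg i q)"
    if "i < N" "p \<in> Pset N l1" "q \<in> Pset N l2" for i p q
    using expect_mono(2)[OF P s ind dist A[OF that]] by blast
  have eq: "(\<lambda>\<omega>. \<Sum>i<N. beta (W \<omega>) N i l1 * beta (W \<omega>) N i l2)
     = (\<lambda>\<omega>. \<Sum>i<N. \<Sum>p\<in>Pset N l1. \<Sum>q\<in>Pset N l2. mono (W \<omega>) (edg i p + edg i q))"
    by (simp add: beta_eq sum_product mono_plus)
  have "BTN M W T N l1 l2 = integral\<^sup>L M (\<lambda>\<omega>. \<Sum>i<N. \<Sum>p\<in>Pset N l1. \<Sum>q\<in>Pset N l2. mono (W \<omega>) (edg i p + edg i q))"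
    unfolding BTN_def eq ..
  also have "\<dots> = (\<Sum>i<N. \<Sum>p\<in>Pset N l1. \<Sum>q\<in>Pset N l2. integral\<^sup>L M (\<lambda>\<omega>. mono (W \<omega>) (edg i p + edg i q)))"
    by (simp add: I1)
  also have "\<dots> = S s N l1 l2"
    unfolding S_def by (intro sum.cong refl) (simp add: I2)
  finally show ?thesis .
qed


lemma S_step1:
  assumes s: "0 < s"
  shows "s\<^sup>2 * real N * S s N l1 l2 \<le> S s N (Suc l1) (Suc l2)"
proof -
  have e1: "S s N (Suc l1) (Suc l2) = (\<Sum>i<N. \<Sum>j<N. \<Sum>p\<in>Pset N l1. \<Sum>j'<N. \<Sum>q\<in>Pset N l2.
      Gm s (add_mset (i,j) (edg j p) + add_mset (i,j') (edg j' q)))"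
    unfolding S_def by (simp add: sum_Pset_Suc)
  have "(\<Sum>i<N. \<Sum>j<N. \<Sum>p\<in>Pset N l1. \<Sum>q\<in>Pset N l2. s\<^sup>2 * Gm s (edg j p + edg j q))
     \<le> (\<Sum>i<N. \<Sum>j<N. \<Sum>p\<in>Pset N l1. \<Sum>j'<N. \<Sum>q\<in>Pset N l2.
      Gm s (add_mset (i,j) (edg j p) + add_mset (i,j') (edg j' q)))"
  proof (intro sum_mono)
    fix i j p assume j: "j \<in> {..<N}"
    have "(\<Sum>q\<in>Pset N l2. s\<^sup>2 * Gm s (edg j p + edg j q))
       \<le> (\<Sum>q\<in>Pset N l2. Gm s (add_mset (i,j) (edg j p) + add_mset (i,j) (edg j q)))"
    proof (intro sum_mono)
      fix q
      have "add_mset (i,j) (edg j p) + add_mset (i,j) (edg j q) = (edg j p + edg j q) + {#(i,j),(i,j)#}"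
        by simp
      then show "s\<^sup>2 * Gm s (edg j p + edg j q) \<le> Gm s (add_mset (i,j) (edg j p) + add_mset (i,j) (edg j q))"
        using Gm_add2_ge[OF s] by simp
    qed
    also have "\<dots> \<le> (\<Sum>j'<N. \<Sum>q\<in>Pset N l2. Gm s (add_mset (i,j) (edg j p) + add_mset (i,j') (edg j' q)))"
      by (rule member_le_sum[OF j, where f="\<lambda>j'. \<Sum>q\<in>Pset N l2. Gm s (add_mset (i,j) (edg j p) + add_mset (i,j') (edg j' q))"])
         (auto intro!: sum_nonneg Gm_nonneg[OF s])
    finally show "(\<Sum>q\<in>Pset N l2. s\<^sup>2 * Gm s (edg j p + edg j q))
       \<le> (\<Sum>j'<N. \<Sum>q\<in>Pset N l2. Gm s (add_mset (i,j) (edg j p) + add_mset (i,j') (edg j' q)))" .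
  qed
  moreover have "(\<Sum>i<N. \<Sum>j<N. \<Sum>p\<in>Pset N l1. \<Sum>q\<in>Pset N l2. s\<^sup>2 * Gm s (edg j p + edg j q))
     = s\<^sup>2 * real N * S s N l1 l2"
    unfolding S_def by (simp add: sum_distrib_left mult_ac)
  ultimately show ?thesis unfolding e1 by linarith
qed

lemma swap3:
  "(\<Sum>i\<in>A. \<Sum>j\<in>B. \<Sum>k\<in>C. G i j k) = (\<Sum>k\<in>C. \<Sum>i\<in>A. \<Sum>j\<in>B. G i j k)"
proof -
  have "(\<Sum>i\<in>A. \<Sum>j\<in>B. \<Sum>k\<in>C. G i j k) = (\<Sum>i\<in>A. \<Sum>k\<in>C. \<Sum>j\<in>B. G i j k)"
    by (rule sum.cong[OF refl], rule sum.swap)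
  also have "\<dots> = (\<Sum>k\<in>C. \<Sum>i\<in>A. \<Sum>j\<in>B. G i j k)" by (rule sum.swap)
  finally show ?thesis .
qed

lemma count_sum:
  "set_mset X \<subseteq> {..<N} \<times> {..<(N::nat)} \<Longrightarrow> (\<Sum>i<N. \<Sum>j<N. real (count X (i,j))) = real (size X)"
proof (induction X)
  case empty then show ?case by simp
next
  case (add x X)
  obtain a b where x: "x = (a,b)" by force
  with add.prems have ab: "a < N" "b < N" by auto
  have "(\<Sum>i<N. \<Sum>j<N. real (count (add_mset x X) (i,j)))
      = (\<Sum>i<N. \<Sum>j<N. real (count X (i,j))) + (\<Sum>i<N. \<Sum>j<N. (if i = a \<and> j = b then 1 else 0))"
  proof -
    have "(\<Sum>i<N. \<Sum>j<N. real (count (add_mset x X) (i,j)))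
      = (\<Sum>i<N. \<Sum>j<N. real (count X (i,j)) + (if i = a \<and> j = b then 1 else 0))"
      by (intro sum.cong refl) (auto simp: x)
    then show ?thesis by (simp add: sum.distrib)
  qed
  also have "(\<Sum>i<N. \<Sum>j<N. (if i = a \<and> j = b then 1 else 0)) = (1::real)"
  proof -
    have "(\<Sum>i<N. \<Sum>j<N. (if i = a \<and> j = b then 1 else 0)) = (\<Sum>i<N. if i = a then (1::real) else 0)"
    proof (rule sum.cong[OF refl])
      fix i assume "i \<in> {..<N}"
      have d: "(\<Sum>j<N. if j = b then 1 else 0::real) = 1"
        using ab by (subst sum.delta) auto
      show "(\<Sum>j<N. (if i = a \<and> j = b then 1 else 0)) = (if i = a then (1::real) else 0)"
        using d by (cases "i = a") simp_all
    qed
    also have "\<dots> = 1" using ab by simp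
    finally show ?thesis .
  qed
  finally show ?case using add by simp
qed


lemma swap5:
  "(\<Sum>i\<in>A. \<Sum>j\<in>B. \<Sum>k\<in>C. \<Sum>p\<in>D. \<Sum>q\<in>E. F i j k p q)
   = (\<Sum>k\<in>C. \<Sum>p\<in>D. \<Sum>q\<in>E. \<Sum>i\<in>A. \<Sum>j\<in>B. F i j k p q)"
proof -
  have "(\<Sum>i\<in>A. \<Sum>j\<in>B. \<Sum>k\<in>C. \<Sum>p\<in>D. \<Sum>q\<in>E. F i j k p q)
     = (\<Sum>k\<in>C. \<Sum>i\<in>A. \<Sum>j\<in>B. \<Sum>p\<in>D. \<Sum>q\<in>E. F i j k p q)" by (rule swap3)
  also have "\<dots> = (\<Sum>k\<in>C. \<Sum>p\<in>D. \<Sum>i\<in>A. \<Sum>j\<in>B. \<Sum>q\<in>E. F i j k p q)"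
    by (rule sum.cong[OF refl], rule swap3)
  also have "\<dots> = (\<Sum>k\<in>C. \<Sum>p\<in>D. \<Sum>q\<in>E. \<Sum>i\<in>A. \<Sum>j\<in>B. F i j k p q)"
    by (rule sum.cong[OF refl], rule sum.cong[OF refl], rule swap3)
  finally show ?thesis .
qed

lemma H_bound:
  assumes s: "0 < s" and that: "X = P + Q"
  shows "s ^ 4 * (real (count X (i,j)) + 1) * Gm s X
    \<le> Gm s (add_mset (i,j) (add_mset (j,k) P) + add_mset (i,j) (add_mset (j,k) Q))"
proof -
  let ?A = "X + {#(j,k),(j,k)#}"
  have eq: "add_mset (i,j) (add_mset (j,k) P) + add_mset (i,j) (add_mset (j,k) Q) = ?A + {#(i,j),(i,j)#}"
    using that by (simp add: multiset_eq_iff)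
  have c: "count X (i,j) \<le> count ?A (i,j)" by simp
  have g1: "s\<^sup>2 * Gm s X \<le> Gm s ?A" by (rule Gm_add2_ge[OF s])
  have "s ^ 4 * (real (count X (i,j)) + 1) * Gm s X = ((real (count X (i,j)) + 1) * s\<^sup>2) * (s\<^sup>2 * Gm s X)"
    by (simp add: power2_eq_square power4_eq_xxxx mult_ac)
  also have "\<dots> \<le> ((real (count X (i,j)) + 1) * s\<^sup>2) * Gm s ?A"
    by (rule mult_left_mono[OF g1]) simp
  also have "\<dots> \<le> ((real (count ?A (i,j)) + 1) * s\<^sup>2) * Gm s ?A"
    using c Gm_nonneg[OF s, of ?A] by (intro mult_right_mono mult_right_mono) auto
  also have "\<dots> = Gm s (?A + {#(i,j),(i,j)#})" using Gm_add2[OF s] by simp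
  finally show ?thesis unfolding eq .
qed

lemma S_step2:
  assumes s: "0 < s"
  shows "s ^ 4 * (real N ^ 2 + real l1 + real l2) * S s N l1 l2 \<le> S s N (l1 + 2) (l2 + 2)"
proof -
  define G where "G i j k p j' k' q = Gm s (add_mset (i,j) (add_mset (j,k) (edg k p)) + add_mset (i,j') (add_mset (j',k') (edg k' q)))" for i j k p j' k' q
  have e1: "S s N (l1 + 2) (l2 + 2) = (\<Sum>i<N. \<Sum>j<N. \<Sum>k<N. \<Sum>p\<in>Pset N l1. \<Sum>j'<N. \<Sum>k'<N. \<Sum>q\<in>Pset N l2.
      G i j k p j' k' q)"
    unfolding S_def G_def by (simp add: sum_Pset_Suc)
  define X where "X k p q = edg k p + edg k q" for k p q
  have step_a: "(\<Sum>i<N. \<Sum>j<N. \<Sum>k<N. \<Sum>p\<in>Pset N l1. \<Sum>q\<in>Pset N l2. G i j k p j k q)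
    \<le> S s N (l1 + 2) (l2 + 2)"
    unfolding e1
  proof (intro sum_mono)
    fix i j k p assume j: "j \<in> {..<N}" and k: "k \<in> {..<N}"
    have "(\<Sum>q\<in>Pset N l2. G i j k p j k q) \<le> (\<Sum>k'<N. \<Sum>q\<in>Pset N l2. G i j k p j k' q)"
      by (rule member_le_sum[OF k, where f="\<lambda>k'. \<Sum>q\<in>Pset N l2. G i j k p j k' q"])
         (auto intro!: sum_nonneg Gm_nonneg[OF s] simp: G_def)
    also have "\<dots> \<le> (\<Sum>j'<N. \<Sum>k'<N. \<Sum>q\<in>Pset N l2. G i j k p j' k' q)"
      by (rule member_le_sum[OF j, where f="\<lambda>j'. \<Sum>k'<N. \<Sum>q\<in>Pset N l2. G i j k p j' k' q"])
         (auto intro!: sum_nonneg Gm_nonneg[OF s] simp: G_def)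
    finally show "(\<Sum>q\<in>Pset N l2. G i j k p j k q) \<le> (\<Sum>j'<N. \<Sum>k'<N. \<Sum>q\<in>Pset N l2. G i j k p j' k' q)" .
  qed
  have step_b: "(\<Sum>i<N. \<Sum>j<N. \<Sum>k<N. \<Sum>p\<in>Pset N l1. \<Sum>q\<in>Pset N l2.
        s ^ 4 * (real (count (X k p q) (i,j)) + 1) * Gm s (X k p q))
     \<le> (\<Sum>i<N. \<Sum>j<N. \<Sum>k<N. \<Sum>p\<in>Pset N l1. \<Sum>q\<in>Pset N l2. G i j k p j k q)"
    unfolding G_def by (intro sum_mono H_bound[OF s]) (simp add: X_def)
  have step_c: "(\<Sum>i<N. \<Sum>j<N. \<Sum>k<N. \<Sum>p\<in>Pset N l1. \<Sum>q\<in>Pset N l2.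
        s ^ 4 * (real (count (X k p q) (i,j)) + 1) * Gm s (X k p q))
     = s ^ 4 * (real N ^ 2 + real l1 + real l2) * S s N l1 l2"
  proof -
    have "(\<Sum>i<N. \<Sum>j<N. \<Sum>k<N. \<Sum>p\<in>Pset N l1. \<Sum>q\<in>Pset N l2.
        s ^ 4 * (real (count (X k p q) (i,j)) + 1) * Gm s (X k p q))
      = (\<Sum>k<N. \<Sum>p\<in>Pset N l1. \<Sum>q\<in>Pset N l2. \<Sum>i<N. \<Sum>j<N.
        s ^ 4 * (real (count (X k p q) (i,j)) + 1) * Gm s (X k p q))"
      by (rule swap5)
    also have "\<dots> = (\<Sum>k<N. \<Sum>p\<in>Pset N l1. \<Sum>q\<in>Pset N l2.
        s ^ 4 * (real N ^ 2 + real l1 + real l2) * Gm s (X k p q))"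
    proof (intro sum.cong refl)
      fix k p q assume k: "k \<in> {..<N}" and p: "p \<in> Pset N l1" and q: "q \<in> Pset N l2"
      have sub: "set_mset (X k p q) \<subseteq> {..<N} \<times> {..<N}"
        using edg_set[of k N p] edg_set[of k N q] k p q by (auto simp: Pset_def X_def)
      have sz: "size (X k p q) = l1 + l2" using p q by (simp add: X_def size_edg Pset_def)
      have "(\<Sum>i<N. \<Sum>j<N. real (count (X k p q) (i,j)) + 1) = real N ^ 2 + real l1 + real l2"
        using count_sum[OF sub] sz by (simp add: sum.distrib power2_eq_square)
      moreover have "(\<Sum>i<N. \<Sum>j<N. s ^ 4 * (real (count (X k p q) (i,j)) + 1) * Gm s (X k p q))
          = (\<Sum>i<N. \<Sum>j<N. real (count (X k p q) (i,j)) + 1) * (s ^ 4 * Gm s (X k p q))"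
        by (simp add: sum_distrib_left sum_distrib_right mult_ac)
      ultimately show "(\<Sum>i<N. \<Sum>j<N. s ^ 4 * (real (count (X k p q) (i,j)) + 1) * Gm s (X k p q))
          = s ^ 4 * (real N ^ 2 + real l1 + real l2) * Gm s (X k p q)"
        by (simp add: mult_ac)
    qed
    also have "\<dots> = s ^ 4 * (real N ^ 2 + real l1 + real l2) * S s N l1 l2"
      unfolding S_def X_def by (simp add: sum_distrib_left)
    finally show ?thesis .
  qed
  show ?thesis using step_a step_b step_c by linarith
qed


theorem mainTheorem13:
  fixes M :: "'a measure" and W :: "'a \<Rightarrow> nat \<Rightarrow> nat \<Rightarrow> real"
    and N T :: nat and \<sigma> :: real
  assumes "prob_space M"
    and "N \<ge> 1" and "T \<ge> 1" and "\<sigma> > 0"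
    and "prob_space.indep_vars M (\<lambda>_. borel) (\<lambda>(i, j) \<omega>. W \<omega> i j) ({..<N} \<times> {..<N})"
    and "\<And>i j. i < N \<Longrightarrow> j < N \<Longrightarrow>
           distributed M lborel (\<lambda>\<omega>. W \<omega> i j) (\<lambda>x. ennreal (normal_density 0 \<sigma> x))"
  shows "(\<forall>l1 l2. l1 \<le> T - 1 \<and> l2 \<le> T - 1 \<longrightarrow>
            BTN M W T N l1 l2 \<le> 1 / (\<sigma>\<^sup>2 * real N) * BTN M W T N (l1 + 1) (l2 + 1))
       \<and> (\<forall>l1 l2. T \<ge> 2 \<and> l1 \<le> T - 2 \<and> l2 \<le> T - 2 \<longrightarrow>
            BTN M W T N l1 l2 \<le>
              1 / (\<sigma> ^ 4 * ((real l1 + real l2) / (real N)\<^sup>2 + 1)) * BTN M W T N (l1 + 2) (l2 + 2))"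
proof -
  have B: "\<And>a b. BTN M W T N a b = S \<sigma> N a b"
    by (rule BTN_eq[OF assms(1) assms(4) assms(5) assms(6)])
  have s: "0 < \<sigma>" by (rule assms(4))
  have Npos: "0 < real N" using assms(2) by simp
  have part1: "BTN M W T N l1 l2 \<le> 1 / (\<sigma>\<^sup>2 * real N) * BTN M W T N (l1 + 1) (l2 + 1)" for l1 l2
  proof -
    have c: "0 < \<sigma>\<^sup>2 * real N" using s Npos by simp
    have "\<sigma>\<^sup>2 * real N * S \<sigma> N l1 l2 \<le> S \<sigma> N (l1 + 1) (l2 + 1)" using S_step1[OF s, of N l1 l2] by simp
    then have "S \<sigma> N l1 l2 \<le> S \<sigma> N (l1 + 1) (l2 + 1) / (\<sigma>\<^sup>2 * real N)"
      using pos_le_divide_eq[OF c] by (simp add: mult.commute)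
    then show ?thesis unfolding B by simp
  qed
  have part2: "BTN M W T N l1 l2 \<le>
              1 / (\<sigma> ^ 4 * ((real l1 + real l2) / (real N)\<^sup>2 + 1)) * BTN M W T N (l1 + 2) (l2 + 2)" for l1 l2
  proof -
    let ?c = "\<sigma> ^ 4 * ((real l1 + real l2) / (real N)\<^sup>2 + 1)"
    have N2: "1 \<le> (real N)\<^sup>2" using assms(2) by simp
    have q: "(real l1 + real l2) / (real N)\<^sup>2 \<le> real l1 + real l2"
    proof -
      have "(real l1 + real l2) * 1 \<le> (real l1 + real l2) * (real N)\<^sup>2"
        by (rule mult_left_mono[OF N2]) simp
      moreover have "0 < (real N)\<^sup>2" using N2 by linarith
      ultimately show ?thesis using pos_divide_le_eq[of "(real N)\<^sup>2" "real l1 + real l2" "real l1 + real l2"]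
        by simp
    qed
    have d: "0 \<le> (real l1 + real l2) / (real N)\<^sup>2" by simp
    have d1: "0 < (real l1 + real l2) / (real N)\<^sup>2 + 1" using d by linarith
    have c: "0 < ?c" using s d1 by (intro mult_pos_pos) auto
    have le: "?c \<le> \<sigma> ^ 4 * (real N ^ 2 + real l1 + real l2)"
      using q N2 s by (intro mult_left_mono) auto
    have "?c * S \<sigma> N l1 l2 \<le> \<sigma> ^ 4 * (real N ^ 2 + real l1 + real l2) * S \<sigma> N l1 l2"
      using le S_nonneg[OF s] by (rule mult_right_mono)
    also have "\<dots> \<le> S \<sigma> N (l1 + 2) (l2 + 2)" by (rule S_step2[OF s])
    finally have "?c * S \<sigma> N l1 l2 \<le> S \<sigma> N (l1 + 2) (l2 + 2)" .
    then have "S \<sigma> N l1 l2 \<le> S \<sigma> N (l1 + 2) (l2 + 2) / ?c"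
      using pos_le_divide_eq[OF c] by (simp only: mult.commute)
    then show ?thesis unfolding B by simp
  qed
  show ?thesis using part1 part2 by blast
qed

end
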